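(* Let $\chi$ be a Dirichlet character modulo $q$ and $\psi$ a Dirichlet character modulo $\ell$, and let $\chi^*$ modulo $q^*$ be the unique primitive Dirichlet character inducing $\chi$. Then for all $s\in\mathbb{C}$ (as an identity of meromorphic functions of $s$) $$\sum_{a\bmod q}\ \sum_{1\leq b\leq\ell}\chi(a)\psi(b)\,e(ab/q)\,\zeta\!\left(\frac{a\ell}{q},\frac{b}{\ell},s\right)=\ell^{s}\,\tau(\chi^* )\,\nu_s(\chi^*,\psi,q/q^* )\,L(\overline{\chi^*}\psi,s),$$ where $$\nu_s(\chi^*,\psi,q/q^* ):=\sum_{d\mid q/q^*}d^{1-s}\psi(d)\mu\big(q/(q^*d)\big)\chi^*\big(q/(q^*d)\big).$$ This formula also holds if $q=1$ or $\ell=1$.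
   Context: $e(x):=e^{2\pi ix}$. For $\alpha\in\mathbb{R}$, $c>0$, $\mathrm{Re}\, s>1$, the Lerch zeta function is $\zeta(\alpha,c,s)=\sum_{n\geq0}e(n\alpha)(n+c)^{-s}$, extended meromorphically in $s$. $\tau(\chi)=\sum_{a\bmod q}\chi(a)e(a/q)$ is the Gauss sum of a character $\chi$ mod $q$. $L(\chi,s)=\sum_{n\geq1}\chi(n)n^{-s}$ with meromorphic continuation; $\mu$ is the Möbius function. *)

theory Defs
  imports "HOL-Analysis.Analysis" "HOL-Computational_Algebra.Squarefree"
begin

definition ecirc :: "real \<Rightarrow> complex" where
  "ecirc x = exp (2 * of_real pi * \<i> * of_real x)"

definition dirichlet_char :: "nat \<Rightarrow> (nat \<Rightarrow> complex) \<Rightarrow> bool" where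
  "dirichlet_char q chi \<longleftrightarrow> q > 0 \<and>
     (\<forall>m n. chi (m * n) = chi m * chi n) \<and>
     (\<forall>n. chi (n + q) = chi n) \<and>
     (\<forall>n. chi n \<noteq> 0 \<longleftrightarrow> coprime n q)"

definition induces :: "nat \<Rightarrow> (nat \<Rightarrow> complex) \<Rightarrow> nat \<Rightarrow> (nat \<Rightarrow> complex) \<Rightarrow> bool" where
  "induces d psi q chi \<longleftrightarrow> d dvd q \<and> dirichlet_char d psi \<and> dirichlet_char q chi \<and>
     (\<forall>n. chi n = (if coprime n q then psi n else 0))"

definition primitive_char :: "nat \<Rightarrow> (nat \<Rightarrow> complex) \<Rightarrow> bool" where
  "primitive_char q chi \<longleftrightarrow> dirichlet_char q chi \<and>
     \<not> (\<exists>d psi. d < q \<and> induces d psi q chi)"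

definition gauss_sum :: "nat \<Rightarrow> (nat \<Rightarrow> complex) \<Rightarrow> complex" where
  "gauss_sum q chi = (\<Sum>a<q. chi a * ecirc (real a / real q))"

definition mu :: "nat \<Rightarrow> int" where
  "mu n = (if squarefree n then (-1) ^ card (prime_factors n) else 0)"

definition lerch_term :: "real \<Rightarrow> real \<Rightarrow> complex \<Rightarrow> nat \<Rightarrow> complex" where
  "lerch_term \<alpha> c s n = ecirc (real n * \<alpha>) / (complex_of_real (real n + c)) powr s"

text \<open>Series defining L(chi,s), indexed so that term k is chi(k+1) (k+1)^(-s).\<close>
definition L_term :: "(nat \<Rightarrow> complex) \<Rightarrow> complex \<Rightarrow> nat \<Rightarrow> complex" where
  "L_term chi s k = chi (Suc k) / (of_nat (Suc k)) powr s"

definition nu :: "complex \<Rightarrow> nat \<Rightarrow> (nat \<Rightarrow> complex) \<Rightarrow> (nat \<Rightarrow> complex) \<Rightarrow> nat \<Rightarrow> complex" where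
  "nu s qs chis psi r = (\<Sum>d\<in>{d. d dvd r}. (of_nat d) powr (1 - s) * psi d *
       of_int (mu (r div d)) * chis (r div d))"

end

theory Submission
  imports Defs "HOL-Number_Theory.Residues" "HOL-Complex_Analysis.Complex_Analysis"
begin

lemma dc_pos: "dirichlet_char q chi \<Longrightarrow> q > 0"
  by (simp add: dirichlet_char_def)
lemma dc_mult: "dirichlet_char q chi \<Longrightarrow> chi (m * n) = chi m * chi n"
  by (simp add: dirichlet_char_def)
lemma dc_nz: "dirichlet_char q chi \<Longrightarrow> chi n \<noteq> 0 \<longleftrightarrow> coprime n q"
  by (simp add: dirichlet_char_def)
lemma dc_zero: "dirichlet_char q chi \<Longrightarrow> \<not> coprime n q \<Longrightarrow> chi n = 0"
  unfolding dirichlet_char_def by blast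
lemma dc_per_k: "dirichlet_char q chi \<Longrightarrow> chi (n + k * q) = chi n"
proof (induction k)
  case 0 then show ?case by simp
next
  case (Suc k)
  have "chi (n + Suc k * q) = chi ((n + k * q) + q)" by (simp add: algebra_simps)
  also have "\<dots> = chi (n + k * q)" using Suc.prems by (simp add: dirichlet_char_def)
  finally show ?case using Suc by simp
qed
lemma dc_mod: "dirichlet_char q chi \<Longrightarrow> chi (n mod q) = chi n"
  using dc_per_k[of q chi "n mod q" "n div q"] by simp
lemma dc_cong: "dirichlet_char q chi \<Longrightarrow> [m = n] (mod q) \<Longrightarrow> chi m = chi n"
  by (metis cong_def dc_mod)
lemma dc_one: "dirichlet_char q chi \<Longrightarrow> chi 1 = 1"
proof -
  assume d: "dirichlet_char q chi"
  have "chi 1 = chi 1 * chi 1" using dc_mult[OF d, of 1 1] by simp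
  moreover have "chi 1 \<noteq> 0" using dc_nz[OF d, of 1] by simp
  ultimately show ?thesis by (metis mult.right_neutral mult_left_cancel)
qed
lemma dc_pow: "dirichlet_char q chi \<Longrightarrow> chi (n ^ k) = chi n ^ k"
proof (induction k)
  case 0 then show ?case using dc_one[of q chi] by simp
next
  case (Suc k) then show ?case using dc_mult[of q chi n "n^k"] by simp
qed
lemma dc_norm: assumes d: "dirichlet_char q chi" and c: "coprime n q"
  shows "norm (chi n) = 1"
proof -
  have "[n ^ totient q = 1] (mod q)" using euler_theorem[OF c] .
  then have "chi n ^ totient q = 1" using dc_cong[OF d] dc_pow[OF d] dc_one[OF d] by metis
  then have "norm (chi n) ^ totient q = 1" by (metis norm_one norm_power)
  moreover have "totient q > 0" using dc_pos[OF d] by simp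
  ultimately show ?thesis using power_eq_imp_eq_base[of "norm (chi n)" "totient q" 1] by simp
qed
lemma dc_cnj: assumes d: "dirichlet_char q chi" and c: "coprime n q"
  shows "cnj (chi n) * chi n = 1"
proof -
  have "cnj (chi n) * chi n = complex_of_real ((norm (chi n))^2)"
    using complex_norm_square[of "chi n"] by (simp add: mult.commute)
  then show ?thesis using dc_norm[OF d c] by simp
qed

lemma ecirc_add: "ecirc (x + y) = ecirc x * ecirc y"
  by (simp add: ecirc_def distrib_left distrib_right exp_add)
lemma ecirc_nat: "ecirc (real k) = 1"
proof -
  have "ecirc (real k) = exp (of_nat k * (2 * of_real pi * \<i>))" by (simp add: ecirc_def mult_ac)
  also have "\<dots> = 1" by (simp add: exp_of_nat_mult)
  finally show ?thesis .
qed
lemma ecirc_mod: assumes "q > 0" shows "ecirc (real x / real q) = ecirc (real (x mod q) / real q)"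
proof -
  have "x = x mod q + (x div q) * q" by simp
  then have "real x = real (x mod q) + real (x div q) * real q" by (metis of_nat_add of_nat_mult)
  then have "real x / real q = real (x mod q) / real q + real (x div q)"
    using assms by (simp add: field_simps)
  then show ?thesis by (simp add: ecirc_add ecirc_nat)
qed
lemma ecirc_cong: "q > 0 \<Longrightarrow> [x = y] (mod q) \<Longrightarrow> ecirc (real x / real q) = ecirc (real y / real q)"
  by (metis cong_def ecirc_mod)
lemma ecirc_eq_1: "ecirc x = 1 \<longleftrightarrow> x \<in> \<int>"
proof -
  have "ecirc x = 1 \<longleftrightarrow> (\<exists>n::int. 2 * pi * x = of_int (2 * n) * pi)"
    by (simp add: ecirc_def exp_eq_1)
  also have "\<dots> \<longleftrightarrow> (\<exists>n::int. x = of_int n)"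
  proof -
    have "(2 * pi * x = of_int (2 * n) * pi) \<longleftrightarrow> x = of_int n" for n :: int
    proof -
      have "of_int (2 * n) * pi = (2 * pi) * of_int n" by simp
      moreover have "2 * pi \<noteq> 0" by simp
      ultimately show ?thesis by (metis mult_cancel_left)
    qed
    then show ?thesis by simp
  qed
  also have "\<dots> \<longleftrightarrow> x \<in> \<int>" by (auto elim: Ints_cases)
  finally show ?thesis .
qed
lemma ecirc_pow: "ecirc (real k * x) = ecirc x ^ k"
  by (simp add: ecirc_def exp_of_nat_mult[symmetric] mult_ac)

lemma geom_ecirc: assumes t: "t > 0"
  shows "(\<Sum>v<t. ecirc (real (v * m) / real t)) = (if t dvd m then of_nat t else 0)"
proof -
  have e: "ecirc (real (v * m) / real t) = ecirc (real m / real t) ^ v" for v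
    using ecirc_pow[of v "real m / real t"] by simp
  have s: "(\<Sum>v<t. ecirc (real (v * m) / real t)) = (\<Sum>v<t. ecirc (real m / real t) ^ v)"
    by (simp only: e)
  show ?thesis
  proof (cases "t dvd m")
    case True
    then obtain k where "m = t * k" by blast
    then have "ecirc (real m / real t) = 1" using t by (simp add: ecirc_nat)
    then have "(\<Sum>v<t. ecirc (real m / real t) ^ v) = of_nat t" by simp
    then show ?thesis using True s by simp
  next
    case False
    have ne: "ecirc (real m / real t) \<noteq> 1"
    proof
      assume "ecirc (real m / real t) = 1"
      then obtain n where n: "real m / real t = of_int n" using ecirc_eq_1 by (auto elim: Ints_cases)
      then have "real m = real t * of_int n" using t by (simp add: field_simps)
      then have "int m = int t * n" by (metis of_int_eq_iff of_int_mult of_int_of_nat_eq)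
      then have "int t dvd int m" by simp
      then show False using False by simp
    qed
    have "ecirc (real m / real t) ^ t = 1" using ecirc_pow[of t "real m / real t"] t
      by (simp add: ecirc_nat)
    then have "(\<Sum>v<t. ecirc (real m / real t) ^ v) = 0" using ne by (simp add: geometric_sum)
    then show ?thesis using False s by simp
  qed
qed

lemma mu_1: "mu 1 = 1" by (simp add: mu_def)

lemma mu_not_sqf: "\<not> squarefree n \<Longrightarrow> mu n = 0" by (simp add: mu_def)

lemma mu_mult_prime: assumes p: "prime p" and nd: "\<not> p dvd d" and d: "d > 0"
  shows "mu (d * p) = - mu d"
proof -
  have "coprime p d" using prime_imp_coprime[OF p nd] .
  then have cop: "coprime d p" by (simp add: coprime_commute)
  have sq: "squarefree (d * p) \<longleftrightarrow> squarefree d"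
    using squarefree_mono[of d "d * p"] squarefree_mult_coprime[OF cop] squarefree_prime[OF p] by auto
  have pf: "prime_factors (d * p) = insert p (prime_factors d)"
    using prime_factors_product[of d p] d p prime_prime_factors[of p] by auto
  have "p \<notin> prime_factors d" using nd by auto
  then have "card (prime_factors (d * p)) = Suc (card (prime_factors d))" by (simp add: pf)
  then show ?thesis by (simp add: mu_def sq)
qed

lemma mu_sum: assumes n: "n > 0"
  shows "(\<Sum>d\<in>{d. d dvd n}. of_int (mu d) :: complex) = (if n = 1 then 1 else 0)"
proof (cases "n = 1")
  case True
  then have e: "{d. d dvd n} = {1}" by auto
  have "(\<Sum>d\<in>{d. d dvd n}. of_int (mu d) :: complex) = 1" unfolding e using mu_1 by simp
  then show ?thesis using True by simp
next
  case False
  obtain p where p: "prime p" "p dvd n" using prime_factor_nat[OF False] by blast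
  define D where "D = {d. d dvd n}"
  define A where "A = {d\<in>D. \<not> p dvd d}"
  define B where "B = (\<lambda>d. d * p) ` A"
  define C where "C = {d\<in>D. p^2 dvd d}"
  have fD: "finite D" unfolding D_def using n by simp
  have AD: "A \<subseteq> D" unfolding A_def by auto
  have BD: "B \<subseteq> D"
  proof
    fix x assume "x \<in> B"
    then obtain k where k: "k \<in> A" "x = k * p" unfolding B_def by auto
    have kn: "k dvd n" "\<not> p dvd k" using k(1) unfolding A_def D_def by auto
    have "coprime p k" using prime_imp_coprime[OF p(1) kn(2)] .
    then have "coprime k p" by (simp add: coprime_commute)
    then have "k * p dvd n" using divides_mult[OF kn(1) p(2)] by simp
    then show "x \<in> D" using k unfolding D_def by simp
  qed
  have CD: "C \<subseteq> D" unfolding C_def by auto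
  have Dun: "D = A \<union> B \<union> C"
  proof (rule antisym)
    show "D \<subseteq> A \<union> B \<union> C"
    proof
      fix d assume dD: "d \<in> D"
      show "d \<in> A \<union> B \<union> C"
      proof (cases "p dvd d")
        case False then show ?thesis using dD unfolding A_def by auto
      next
        case True
        show ?thesis
        proof (cases "p^2 dvd d")
          case True then show ?thesis using dD unfolding C_def by auto
        next
          case False
          obtain k where k: "d = p * k" using \<open>p dvd d\<close> by blast
          have "\<not> p dvd k"
          proof
            assume "p dvd k"
            then obtain j where "k = p * j" by blast
            then have "d = p^2 * j" using k by (simp add: power2_eq_square)
            then show False using False by simp
          qed
          moreover have "k dvd n" using dD k unfolding D_def by (metis dvd_mult_right mem_Collect_eq)
          ultimately have "k \<in> A" unfolding A_def D_def by simp
          then show ?thesis using k unfolding B_def by (auto simp: mult.commute)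
        qed
      qed
    qed
  qed (use AD BD CD in auto)
  have dAB: "A \<inter> B = {}" unfolding A_def B_def by auto
  have dABC: "(A \<union> B) \<inter> C = {}"
  proof -
    have pp: "p dvd p^2" by (simp add: power2_eq_square)
    have "A \<inter> C = {}" unfolding A_def C_def using dvd_trans[OF pp] by blast
    moreover have "B \<inter> C = {}"
    proof (rule ccontr)
      assume "B \<inter> C \<noteq> {}"
      then obtain k where k: "k \<in> A" "p^2 dvd k * p" unfolding B_def C_def by auto
      then have "p * p dvd k * p" by (simp add: power2_eq_square)
      then have "p dvd k" using p dvd_times_right_cancel_iff[of p p k] by (simp add: prime_gt_0_nat)
      then show False using k unfolding A_def by simp
    qed
    ultimately show ?thesis by auto
  qed
  have fA: "finite A" using fD AD finite_subset by blast
  have fB: "finite B" using fD BD finite_subset by blast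
  have fC: "finite C" using fD CD finite_subset by blast
  have sC: "(\<Sum>d\<in>C. of_int (mu d) :: complex) = 0"
  proof (rule sum.neutral, rule ballI)
    fix d assume "d \<in> C"
    then have "p^2 dvd d" unfolding C_def by simp
    moreover have "\<not> p dvd 1" using p(1) by (metis not_prime_1 nat_dvd_1_iff_1)
    ultimately have "\<not> squarefree d" using not_squarefreeI by blast
    then show "of_int (mu d) = (0::complex)" by (simp add: mu_not_sqf)
  qed
  have inj: "inj_on (\<lambda>d. d * p) A" using p by (auto simp: inj_on_def prime_gt_0_nat)
  have sB: "(\<Sum>d\<in>B. of_int (mu d) :: complex) = - (\<Sum>d\<in>A. of_int (mu d))"
  proof -
    have "(\<Sum>d\<in>B. of_int (mu d) :: complex) = (\<Sum>d\<in>A. of_int (mu (d * p)))"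
      unfolding B_def using sum.reindex[OF inj] by simp
    also have "\<dots> = (\<Sum>d\<in>A. - of_int (mu d))"
    proof (rule sum.cong[OF refl])
      fix d assume dA: "d \<in> A"
      have "d > 0" using dA n unfolding A_def D_def by (auto intro: Nat.gr0I)
      then show "(of_int (mu (d * p)) :: complex) = - of_int (mu d)"
        using mu_mult_prime[OF p(1) _ \<open>d > 0\<close>] dA unfolding A_def by simp
    qed
    finally show ?thesis by (simp add: sum_negf)
  qed
  have "(\<Sum>d\<in>D. of_int (mu d) :: complex) = (\<Sum>d\<in>A. of_int (mu d)) + (\<Sum>d\<in>B. of_int (mu d)) + (\<Sum>d\<in>C. of_int (mu d))"
    unfolding Dun using fA fB fC dAB dABC by (simp add: sum.union_disjoint)
  then show ?thesis using sB sC False unfolding D_def by simp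
qed

lemma coprime_by_primes:
  fixes m q :: nat
  assumes "\<And>p. prime p \<Longrightarrow> p dvd q \<Longrightarrow> \<not> p dvd m"
  shows "coprime m q"
proof (rule ccontr)
  assume "\<not> coprime m q"
  then obtain c where c: "c dvd m" "c dvd q" "\<not> is_unit c" by (rule not_coprimeE)
  then have "c \<noteq> 1" by auto
  then obtain p where p: "prime p" "p dvd c" using prime_factor_nat by blast
  then show False using assms[OF p(1)] c dvd_trans by blast
qed

lemma lift_coprime:
  fixes n q1 qs :: nat
  assumes c: "coprime n q1" and qs: "qs > 0"
  shows "\<exists>m. [m = n] (mod q1) \<and> coprime m qs"
proof -
  define P where "P = {p \<in> prime_factors qs. \<not> p dvd n}"
  define k where "k = \<Prod>P"
  have fP: "finite P" unfolding P_def by simp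
  define m where "m = n + k * q1"
  have "coprime m qs"
  proof (rule coprime_by_primes)
    fix p :: nat assume p: "prime p" "p dvd qs"
    show "\<not> p dvd m"
    proof (cases "p dvd n")
      case True
      have "\<not> p dvd q1"
      proof
        assume "p dvd q1"
        then have "is_unit p" using c True coprime_common_divisor by blast
        then show False using p by simp
      qed
      moreover have "\<not> p dvd k"
      proof
        assume "p dvd k"
        then obtain x where x: "x \<in> P" "p dvd x" unfolding k_def using prime_dvd_prod_iff[OF fP p(1), of id] by auto
        have "prime x" using x unfolding P_def by auto
        then have "p = x" using primes_dvd_imp_eq[OF p(1) _ x(2)] by simp
        then show False using x True unfolding P_def by simp
      qed
      ultimately have "\<not> p dvd k * q1" using p(1) by (simp add: prime_dvd_mult_iff)
      then show ?thesis unfolding m_def using True by (simp add: dvd_add_right_iff)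
    next
      case False
      have "p \<in> P" unfolding P_def using p False qs by (auto simp: in_prime_factors_iff)
      then have "p dvd k" unfolding k_def using dvd_prodI[OF fP _, of p id] by simp
      then have "p dvd k * q1" by simp
      then show ?thesis unfolding m_def using False by (simp add: dvd_add_left_iff)
    qed
  qed
  moreover have "[m = n] (mod q1)" unfolding m_def cong_def by simp
  ultimately show ?thesis by blast
qed

lemma sum_mult_perm:
  fixes g :: "nat \<Rightarrow> 'a::comm_monoid_add"
  assumes c: "coprime a q" and q: "q > 0"
  shows "(\<Sum>u<q. g ((a * u) mod q)) = (\<Sum>u<q. g u)"
proof -
  have inj: "inj_on (\<lambda>u. (a * u) mod q) {..<q}"
  proof (rule inj_onI)
    fix u v assume uv: "u \<in> {..<q}" "v \<in> {..<q}" "(a * u) mod q = (a * v) mod q"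
    then have "[u * a = v * a] (mod q)" unfolding cong_def by (simp add: mult.commute)
    then have "[u = v] (mod q)" using cong_mult_rcancel_nat[of a q u v] c by simp
    then show "u = v" using uv unfolding cong_def by simp
  qed
  have sub: "(\<lambda>u. (a * u) mod q) ` {..<q} \<subseteq> {..<q}" using q by auto
  have "(\<lambda>u. (a * u) mod q) ` {..<q} = {..<q}" using endo_inj_surj[OF _ sub inj] by simp
  then have "bij_betw (\<lambda>u. (a * u) mod q) {..<q} {..<q}" using inj by (simp add: bij_betw_def)
  then show ?thesis by (rule sum.reindex_bij_betw)
qed

lemma gauss_coprime:
  assumes d: "dirichlet_char q chi" and c: "coprime n q"
  shows "(\<Sum>u<q. chi u * ecirc (real (u * n) / real q)) = cnj (chi n) * gauss_sum q chi"
proof -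
  have q: "q > 0" using dc_pos[OF d] .
  have c': "coprime n q" using c .
  have "gauss_sum q chi = (\<Sum>u<q. chi ((n * u) mod q) * ecirc (real ((n * u) mod q) / real q))"
    unfolding gauss_sum_def using sum_mult_perm[OF c' q, of "\<lambda>x. chi x * ecirc (real x / real q)"] by simp
  also have "\<dots> = (\<Sum>u<q. chi n * (chi u * ecirc (real (u * n) / real q)))"
  proof (rule sum.cong[OF refl])
    fix u
    have "chi ((n * u) mod q) = chi n * chi u" using dc_mod[OF d] dc_mult[OF d] by simp
    moreover have "ecirc (real ((n * u) mod q) / real q) = ecirc (real (u * n) / real q)"
      using ecirc_mod[OF q, of "u * n"] by (simp add: mult.commute)
    ultimately show "chi ((n * u) mod q) * ecirc (real ((n * u) mod q) / real q) = chi n * (chi u * ecirc (real (u * n) / real q))"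
      by simp
  qed
  also have "\<dots> = chi n * (\<Sum>u<q. chi u * ecirc (real (u * n) / real q))" by (simp add: sum_distrib_left)
  finally have "cnj (chi n) * gauss_sum q chi = (cnj (chi n) * chi n) * (\<Sum>u<q. chi u * ecirc (real (u * n) / real q))"
    by (simp add: mult.assoc)
  then show ?thesis using dc_cnj[OF d c] by simp
qed

lemma inverse_mod:
  fixes m q :: nat
  assumes c: "coprime m q"
  shows "\<exists>i. [m * i = 1] (mod q) \<and> coprime i q"
proof (cases "q = 0")
  case True
  then have "m = 1" using c by simp
  then show ?thesis using True by (intro exI[of _ 1]) simp
next
  case False
  then have t: "totient q > 0" by simp
  define i where "i = m ^ (totient q - 1)"
  have "m * i = m ^ totient q" unfolding i_def using t by (simp add: power_eq_if)
  then have "[m * i = 1] (mod q)" using euler_theorem[OF c] by simp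
  moreover have "coprime i q" unfolding i_def using c by simp
  ultimately show ?thesis by blast
qed

lemma not_induced_exists:
  assumes prim: "primitive_char qs chi" and q1: "q1 dvd qs" "q1 < qs"
  shows "\<exists>a. coprime a qs \<and> [a = 1] (mod q1) \<and> chi a \<noteq> 1"
proof (rule ccontr)
  assume H0: "\<not> ?thesis"
  have H: "chi a = 1" if "coprime a qs" "[a = 1] (mod q1)" for a using H0 that by blast
  have d: "dirichlet_char qs chi" using prim by (simp add: primitive_char_def)
  have qs: "qs > 0" using dc_pos[OF d] .
  have q1pos: "q1 > 0" using q1 qs by (auto intro: Nat.gr0I)
  have wd: "chi m = chi m'" if m: "coprime m qs" "coprime m' qs" "[m = m'] (mod q1)" for m m'
  proof -
    obtain i where i: "[m * i = 1] (mod qs)" "coprime i qs" using inverse_mod[OF m(1)] by blast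
    define a where "a = m' * i"
    have ca: "coprime a qs" unfolding a_def using m(2) i(2) by simp
    have "[a * m = m' * (m * i)] (mod qs)" unfolding a_def by (simp add: mult_ac)
    also have "[m' * (m * i) = m' * 1] (mod qs)" using i(1) by (rule cong_mult[OF cong_refl])
    finally have "[a * m = m'] (mod q1)" using q1(1) cong_dvd_modulus_nat by simp
    also have "[m' = m] (mod q1)" using m(3) by (simp add: cong_sym)
    finally have "[a * m = 1 * m] (mod q1)" by simp
    moreover have "coprime m q1" using m(1) q1(1) coprime_divisors[of m m q1 qs] by simp
    ultimately have "[a = 1] (mod q1)" using cong_mult_rcancel_nat by blast
    then have "chi a = 1" using H ca by blast
    have "chi m' = chi (m' * (m * i))"
      using dc_cong[OF d, of "m' * (m * i)" m'] \<open>[m' * (m * i) = m' * 1] (mod qs)\<close> by simp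
    also have "\<dots> = chi a * chi m" unfolding a_def using dc_mult[OF d] by (simp add: mult_ac)
    finally show ?thesis using \<open>chi a = 1\<close> by simp
  qed
  define rep where "rep n = (SOME m. [m = n] (mod q1) \<and> coprime m qs)" for n
  have rep: "[rep n = n] (mod q1) \<and> coprime (rep n) qs" if "coprime n q1" for n
    unfolding rep_def using someI_ex[OF lift_coprime[OF that qs]] .
  define psi where "psi n = (if coprime n q1 then chi (rep n) else 0)" for n
  have key: "psi n = chi m" if "coprime n q1" "[m = n] (mod q1)" "coprime m qs" for n m
  proof -
    have "chi (rep n) = chi m"
      using wd[of "rep n" m] rep[OF that(1)] that(2,3) by (meson cong_sym cong_trans)
    then show ?thesis unfolding psi_def using that(1) by simp
  qed
  have dpsi: "dirichlet_char q1 psi"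
    unfolding dirichlet_char_def
  proof (intro conjI allI)
    show "q1 > 0" by (rule q1pos)
  next
    fix m n
    show "psi (m * n) = psi m * psi n"
    proof (cases "coprime m q1 \<and> coprime n q1")
      case True
      have r: "[rep m * rep n = m * n] (mod q1)" using rep True by (blast intro: cong_mult)
      have c: "coprime (rep m * rep n) qs" using rep True by simp
      have "psi (m * n) = chi (rep m * rep n)" using key[OF _ r c] True by simp
      also have "\<dots> = psi m * psi n" using dc_mult[OF d] True unfolding psi_def by simp
      finally show ?thesis .
    next
      case False
      then show ?thesis unfolding psi_def by auto
    qed
  next
    fix n
    have cg: "[n + q1 = n] (mod q1)" by (simp add: cong_def)
    have e: "coprime (n + q1) q1 \<longleftrightarrow> coprime n q1"
      using cong_imp_coprime[OF cg] cong_imp_coprime[OF cong_sym[OF cg]] by blast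
    show "psi (n + q1) = psi n"
    proof (cases "coprime n q1")
      case True
      have "[rep n = n + q1] (mod q1)" using rep[OF True] by (simp add: cong_def)
      then have "psi (n + q1) = chi (rep n)" using key[of "n + q1" "rep n"] rep[OF True] True e by simp
      then show ?thesis unfolding psi_def using True by simp
    next
      case False then show ?thesis unfolding psi_def using e by simp
    qed
  next
    fix n
    show "psi n \<noteq> 0 \<longleftrightarrow> coprime n q1"
      unfolding psi_def using rep dc_nz[OF d] by auto
  qed
  have "induces q1 psi qs chi"
    unfolding induces_def
  proof (intro conjI allI)
    show "q1 dvd qs" by (rule q1(1))
    show "dirichlet_char q1 psi" by (rule dpsi)
    show "dirichlet_char qs chi" by (rule d)
  next
    fix n
    show "chi n = (if coprime n qs then psi n else 0)"
    proof (cases "coprime n qs")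
      case True
      have "coprime n q1" using True q1(1) coprime_divisors[of n n q1 qs] by simp
      then show ?thesis using key[of n n] True by simp
    next
      case False then show ?thesis using dc_zero[OF d] by simp
    qed
  qed
  then show False using prim q1(2) unfolding primitive_char_def by blast
qed

lemma gauss_noncoprime:
  assumes prim: "primitive_char qs chi" and nc: "\<not> coprime n qs"
  shows "(\<Sum>u<qs. chi u * ecirc (real (u * n) / real qs)) = 0"
proof -
  have d: "dirichlet_char qs chi" using prim by (simp add: primitive_char_def)
  have qs: "qs > 0" using dc_pos[OF d] .
  define g where "g = gcd n qs"
  define q1 where "q1 = qs div g"
  have g1: "g \<noteq> 1" unfolding g_def using nc by (simp add: coprime_iff_gcd_eq_1)
  have gpos: "g > 0" unfolding g_def using qs by simp
  have qsg: "qs = q1 * g" unfolding q1_def g_def by simp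
  have q1dvd: "q1 dvd qs" using qsg by simp
  have q1lt: "q1 < qs" using qsg g1 gpos qs by (metis less_one mult.right_neutral nat_mult_less_cancel1 nat_neq_iff not_gr0)
  obtain a where a: "coprime a qs" "[a = 1] (mod q1)" "chi a \<noteq> 1"
    using not_induced_exists[OF prim q1dvd q1lt] by blast
  obtain n' where n': "n = g * n'" unfolding g_def by (metis dvd_mult_div_cancel gcd_dvd1)
  have an: "[a * n = n] (mod qs)"
  proof -
    have "[a * n' = 1 * n'] (mod q1)" using a(2) by (rule cong_mult[OF _ cong_refl])
    then have "(a * n') mod q1 = n' mod q1" unfolding cong_def by simp
    then have "(g * (a * n')) mod (g * q1) = (g * n') mod (g * q1)" by (simp add: mod_mult_mult1)
    then show ?thesis unfolding cong_def using qsg n' by (simp add: mult_ac)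
  qed
  define S where "S = (\<Sum>u<qs. chi u * ecirc (real (u * n) / real qs))"
  have "S = (\<Sum>u<qs. chi ((a * u) mod qs) * ecirc (real (((a * u) mod qs) * n) / real qs))"
    unfolding S_def using sum_mult_perm[OF a(1) qs, of "\<lambda>x. chi x * ecirc (real (x * n) / real qs)"] by simp
  also have "\<dots> = (\<Sum>u<qs. chi a * (chi u * ecirc (real (u * n) / real qs)))"
  proof (rule sum.cong[OF refl])
    fix u
    have "chi ((a * u) mod qs) = chi a * chi u" using dc_mod[OF d] dc_mult[OF d] by simp
    moreover have "[((a * u) mod qs) * n = u * n] (mod qs)"
    proof -
      have "[((a * u) mod qs) * n = (a * u) * n] (mod qs)" by (simp add: cong_def mod_mult_left_eq)
      also have "[(a * u) * n = u * (a * n)] (mod qs)" by (simp add: mult_ac)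
      also have "[u * (a * n) = u * n] (mod qs)" using an by (rule cong_mult[OF cong_refl])
      finally show ?thesis .
    qed
    then have "ecirc (real (((a * u) mod qs) * n) / real qs) = ecirc (real (u * n) / real qs)"
      using ecirc_cong[OF qs] by blast
    ultimately show "chi ((a * u) mod qs) * ecirc (real (((a * u) mod qs) * n) / real qs) = chi a * (chi u * ecirc (real (u * n) / real qs))"
      by simp
  qed
  also have "\<dots> = chi a * S" unfolding S_def by (simp add: sum_distrib_left)
  finally have "(1 - chi a) * S = 0" by (simp add: algebra_simps)
  then show ?thesis using a(3) unfolding S_def by simp
qed

lemma gauss_prim:
  assumes prim: "primitive_char qs chi"
  shows "(\<Sum>u<qs. chi u * ecirc (real (u * n) / real qs)) = cnj (chi n) * gauss_sum qs chi"
proof (cases "coprime n qs")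
  case True
  then show ?thesis using gauss_coprime prim unfolding primitive_char_def by blast
next
  case False
  have d: "dirichlet_char qs chi" using prim by (simp add: primitive_char_def)
  then show ?thesis using gauss_noncoprime[OF prim False] dc_zero[OF d False] by simp
qed

lemma div_div_dvd: fixes r d :: nat assumes "d dvd r" "r > 0" shows "r div (r div d) = d"
proof -
  obtain k where k: "r = d * k" using assms(1) by blast
  then have "d > 0" "k > 0" using assms(2) by auto
  then show ?thesis using k by simp
qed

lemma sum_divisors_flip:
  fixes r :: nat assumes r: "r > 0"
  shows "(\<Sum>e\<in>{e. e dvd r}. h e) = (\<Sum>d\<in>{d. d dvd r}. h (r div d))"
proof (rule sum.reindex_bij_witness[of _ "\<lambda>d. r div d" "\<lambda>d. r div d"])
  fix d assume "d \<in> {d. d dvd r}"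
  then show "r div (r div d) = d" "r div d \<in> {e. e dvd r}"
    using div_div_dvd[OF _ r] by (auto simp: div_dvd_div dvd_div_eq_mult)
next
  fix e assume "e \<in> {e. e dvd r}"
  then show "r div (r div e) = e" "r div e \<in> {d. d dvd r}"
    using div_div_dvd[OF _ r] by (auto simp: dvd_div_eq_mult)
qed (simp add: div_div_dvd[OF _ r])

lemma sum_multiples:
  fixes e q :: nat and f :: "nat \<Rightarrow> 'a::comm_monoid_add"
  assumes e: "e > 0" "e dvd q"
  shows "(\<Sum>a<q. if e dvd a then f a else 0) = (\<Sum>j<q div e. f (e * j))"
proof -
  have "(\<Sum>a<q. if e dvd a then f a else 0) = sum f {a\<in>{..<q}. e dvd a}"
    by (rule sum.inter_filter[symmetric]) simp
  also have "{a\<in>{..<q}. e dvd a} = (\<lambda>j. e * j) ` {..<q div e}"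
  proof (intro equalityI subsetI)
    fix a assume "a \<in> {a\<in>{..<q}. e dvd a}"
    then obtain j where j: "a = e * j" "a < q" by auto
    then have "j < q div e" using e by (metis dvd_mult_div_cancel mult_less_cancel1)
    then show "a \<in> (\<lambda>j. e * j) ` {..<q div e}" using j by auto
  next
    fix a assume "a \<in> (\<lambda>j. e * j) ` {..<q div e}"
    then obtain j where j: "a = e * j" "j < q div e" by auto
    then have "e * j < q" using e by (metis dvd_mult_div_cancel mult_less_cancel1)
    then show "a \<in> {a\<in>{..<q}. e dvd a}" using j by auto
  qed
  also have "sum f ((\<lambda>j. e * j) ` {..<q div e}) = (\<Sum>j<q div e. f (e * j))"
    using e by (subst sum.reindex) (auto simp: inj_on_def)
  finally show ?thesis .
qed

lemma inner_sum:
  assumes prim: "primitive_char qs chis" and t: "t > 0"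
  shows "(\<Sum>j<qs * t. chis j * ecirc (real (j * m) / real (qs * t)))
         = (if t dvd m then of_nat t * cnj (chis (m div t)) * gauss_sum qs chis else 0)"
proof -
  have d: "dirichlet_char qs chis" using prim by (simp add: primitive_char_def)
  have qs: "qs > 0" using dc_pos[OF d] .
  define f where "f j = chis j * ecirc (real (j * m) / real (qs * t))" for j
  have "(\<Sum>j<qs * t. f j) = (\<Sum>v<t. sum f {v * qs..<v * qs + qs})"
    using sum.nat_group[of f qs t] by (simp add: mult.commute)
  also have "\<dots> = (\<Sum>v<t. \<Sum>u<qs. f (u + v * qs))"
  proof (rule sum.cong[OF refl])
    fix v
    have "sum f {0 + v * qs..<qs + v * qs} = (\<Sum>u=0..<qs. f (u + v * qs))"
      by (rule sum.shift_bounds_nat_ivl)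
    then show "sum f {v * qs..<v * qs + qs} = (\<Sum>u<qs. f (u + v * qs))"
      by (simp add: add.commute atLeast0LessThan)
  qed
  also have "\<dots> = (\<Sum>v<t. \<Sum>u<qs. (chis u * ecirc (real (u * m) / real (qs * t))) * ecirc (real (v * m) / real t))"
  proof (intro sum.cong refl)
    fix v u
    have "chis (u + v * qs) = chis u" using dc_per_k[OF d] .
    moreover have "real ((u + v * qs) * m) / real (qs * t) = real (u * m) / real (qs * t) + real (v * m) / real t"
      using qs t by (simp add: field_simps)
    ultimately show "f (u + v * qs) = (chis u * ecirc (real (u * m) / real (qs * t))) * ecirc (real (v * m) / real t)"
      unfolding f_def by (simp add: ecirc_add)
  qed
  also have "\<dots> = (\<Sum>u<qs. chis u * ecirc (real (u * m) / real (qs * t))) * (\<Sum>v<t. ecirc (real (v * m) / real t))"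
    by (simp add: sum_distrib_left sum_distrib_right sum.swap[of _ "{..<t}"])
  also have "\<dots> = (\<Sum>u<qs. chis u * ecirc (real (u * m) / real (qs * t))) * (if t dvd m then of_nat t else 0)"
    using geom_ecirc[OF t] by simp
  also have "\<dots> = (if t dvd m then of_nat t * cnj (chis (m div t)) * gauss_sum qs chis else 0)"
  proof (cases "t dvd m")
    case True
    then obtain m' where m': "m = t * m'" by blast
    have "(\<Sum>u<qs. chis u * ecirc (real (u * m) / real (qs * t))) = (\<Sum>u<qs. chis u * ecirc (real (u * m') / real qs))"
    proof (intro sum.cong refl)
      fix u
      have "real (u * m) / real (qs * t) = real (u * m') / real qs" using t m' by (simp add: field_simps)
      then show "chis u * ecirc (real (u * m) / real (qs * t)) = chis u * ecirc (real (u * m') / real qs)" by simp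
    qed
    also have "\<dots> = cnj (chis m') * gauss_sum qs chis" by (rule gauss_prim[OF prim])
    finally show ?thesis using True m' t by simp
  next
    case False then show ?thesis by simp
  qed
  finally show ?thesis unfolding f_def .
qed

lemma chi_mu:
  assumes ind: "induces qs chis q chi" and q: "q > 0"
  shows "chi a = chis a * (\<Sum>e\<in>{e. e dvd q div qs}. if e dvd a then of_int (mu e) else 0)"
proof -
  define r where "r = q div qs"
  have qsq: "qs dvd q" and dchis: "dirichlet_char qs chis" and chi: "\<forall>n. chi n = (if coprime n q then chis n else 0)"
    using ind unfolding induces_def by auto
  have qeq: "q = qs * r" unfolding r_def using qsq by simp
  have r: "r > 0" using q qeq by (auto intro: Nat.gr0I)
  have "(\<Sum>e\<in>{e. e dvd r}. if e dvd a then of_int (mu e) else 0) = (\<Sum>e\<in>{e\<in>{e. e dvd r}. e dvd a}. of_int (mu e) :: complex)"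
    using r by (intro sum.inter_filter[symmetric]) simp
  also have "{e\<in>{e. e dvd r}. e dvd a} = {e. e dvd gcd a r}" by auto
  also have "(\<Sum>e\<in>{e. e dvd gcd a r}. of_int (mu e) :: complex) = (if gcd a r = 1 then 1 else 0)"
    using mu_sum[of "gcd a r"] r by simp
  finally have s: "(\<Sum>e\<in>{e. e dvd r}. if e dvd a then of_int (mu e) else 0) = (if coprime a r then 1 else (0::complex))"
    by (simp add: coprime_iff_gcd_eq_1)
  show ?thesis
  proof (cases "coprime a qs")
    case True
    then show ?thesis using chi s dc_pos[OF dchis] unfolding r_def[symmetric] qeq by simp
  next
    case False
    then show ?thesis using chi dc_zero[OF dchis False] unfolding qeq by simp
  qed
qed

lemma G_formula:
  assumes prim: "primitive_char qs chis" and ind: "induces qs chis q chi" and q: "q > 0"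
  shows "(\<Sum>a<q. chi a * ecirc (real (a * m) / real q))
    = gauss_sum qs chis * (\<Sum>d\<in>{d. d dvd q div qs}. of_int (mu (q div qs div d)) * chis (q div qs div d) *
         (if d dvd m then of_nat d * cnj (chis (m div d)) else 0))"
proof -
  define r where "r = q div qs"
  define E where "E = {e. e dvd r}"
  define \<tau> where "\<tau> = gauss_sum qs chis"
  have qsq: "qs dvd q" and dchis: "dirichlet_char qs chis"
    using ind unfolding induces_def by auto
  have qs: "qs > 0" using dc_pos[OF dchis] .
  have qeq: "q = qs * r" unfolding r_def using qsq by simp
  have r: "r > 0" using q qeq by (auto intro: Nat.gr0I)
  have fE: "finite E" unfolding E_def using r by simp
  have "(\<Sum>a<q. chi a * ecirc (real (a * m) / real q))
      = (\<Sum>a<q. \<Sum>e\<in>E. (if e dvd a then of_int (mu e) * (chis a * ecirc (real (a * m) / real q)) else 0))"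
  proof (rule sum.cong[OF refl])
    fix a
    show "chi a * ecirc (real (a * m) / real q) = (\<Sum>e\<in>E. (if e dvd a then of_int (mu e) * (chis a * ecirc (real (a * m) / real q)) else 0))"
      unfolding chi_mu[OF ind q, of a] E_def r_def
      by (simp add: sum_distrib_left sum_distrib_right if_distrib mult_ac cong: if_cong)
  qed
  also have "\<dots> = (\<Sum>e\<in>E. \<Sum>a<q. (if e dvd a then of_int (mu e) * (chis a * ecirc (real (a * m) / real q)) else 0))"
    by (rule sum.swap)
  also have "\<dots> = (\<Sum>e\<in>E. of_int (mu e) * chis e * (if (r div e) dvd m then of_nat (r div e) * cnj (chis (m div (r div e))) * \<tau> else 0))"
  proof (rule sum.cong[OF refl])
    fix e assume eE: "e \<in> E"
    have er: "e dvd r" using eE unfolding E_def by simp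
    have e0: "e > 0" using er r by (cases e) auto
    have eq: "e dvd q" using er qeq by simp
    define t where "t = r div e"
    have rt: "r = e * t" unfolding t_def using er by simp
    have t0: "t > 0" using rt r by (cases t) auto
    have qe2: "q = e * (qs * t)" using qeq rt by (simp add: mult_ac)
    have qe: "q div e = qs * t" using qe2 e0 by simp
    have "(\<Sum>a<q. (if e dvd a then of_int (mu e) * (chis a * ecirc (real (a * m) / real q)) else 0))
        = (\<Sum>j<q div e. of_int (mu e) * (chis (e * j) * ecirc (real (e * j * m) / real q)))"
      using sum_multiples[OF e0 eq, of "\<lambda>a. of_int (mu e) * (chis a * ecirc (real (a * m) / real q))"] by simp
    also have "\<dots> = (\<Sum>j<qs * t. of_int (mu e) * chis e * (chis j * ecirc (real (j * m) / real (qs * t))))"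
    proof (unfold qe, rule sum.cong[OF refl])
      fix j
      have "real (e * j * m) / real q = (real e * real (j * m)) / (real e * real (qs * t))"
        unfolding qe2 by (simp only: of_nat_mult mult.assoc)
      also have "\<dots> = real (j * m) / real (qs * t)" using e0 by simp
      finally have "real (e * j * m) / real q = real (j * m) / real (qs * t)" .
      then show "of_int (mu e) * (chis (e * j) * ecirc (real (e * j * m) / real q)) = of_int (mu e) * chis e * (chis j * ecirc (real (j * m) / real (qs * t)))"
        using dc_mult[OF dchis, of e j] by simp
    qed
    also have "\<dots> = of_int (mu e) * chis e * (\<Sum>j<qs * t. chis j * ecirc (real (j * m) / real (qs * t)))"
      by (simp add: sum_distrib_left)
    also have "\<dots> = of_int (mu e) * chis e * (if t dvd m then of_nat t * cnj (chis (m div t)) * \<tau> else 0)"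
      unfolding \<tau>_def using inner_sum[OF prim t0] by simp
    finally show "(\<Sum>a<q. (if e dvd a then of_int (mu e) * (chis a * ecirc (real (a * m) / real q)) else 0))
        = of_int (mu e) * chis e * (if (r div e) dvd m then of_nat (r div e) * cnj (chis (m div (r div e))) * \<tau> else 0)"
      unfolding t_def .
  qed
  also have "\<dots> = (\<Sum>d\<in>E. of_int (mu (r div d)) * chis (r div d) * (if d dvd m then of_nat d * cnj (chis (m div d)) * \<tau> else 0))"
    unfolding E_def using sum_divisors_flip[OF r] div_div_dvd[OF _ r]
    by (smt (verit, ccfv_SIG) mem_Collect_eq sum.cong)
  also have "\<dots> = \<tau> * (\<Sum>d\<in>E. of_int (mu (r div d)) * chis (r div d) * (if d dvd m then of_nat d * cnj (chis (m div d)) else 0))"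
    unfolding sum_distrib_left by (intro sum.cong refl) (auto simp: mult_ac)
  finally show ?thesis unfolding \<tau>_def E_def r_def .
qed

lemma dc_prod:
  assumes d1: "dirichlet_char q1 chi" and d2: "dirichlet_char q2 psi"
  shows "dirichlet_char (q1 * q2) (\<lambda>n. cnj (chi n) * psi n)"
  unfolding dirichlet_char_def
proof (intro conjI allI)
  show "q1 * q2 > 0" using dc_pos[OF d1] dc_pos[OF d2] by simp
next
  fix m n
  have "chi (m * n) = chi m * chi n" by (rule dc_mult[OF d1])
  moreover have "psi (m * n) = psi m * psi n" by (rule dc_mult[OF d2])
  ultimately show "cnj (chi (m * n)) * psi (m * n) = cnj (chi m) * psi m * (cnj (chi n) * psi n)"
    by (simp only: complex_cnj_mult mult_ac)
next
  fix n
  have "chi (n + q2 * q1) = chi n" by (rule dc_per_k[OF d1])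
  then have "chi (n + q1 * q2) = chi n" by (simp only: mult.commute)
  moreover have "psi (n + q1 * q2) = psi n" by (rule dc_per_k[OF d2])
  ultimately show "cnj (chi (n + q1 * q2)) * psi (n + q1 * q2) = cnj (chi n) * psi n" by (simp only:)
next
  fix n
  have a: "chi n \<noteq> 0 \<longleftrightarrow> coprime n q1" by (rule dc_nz[OF d1])
  have b: "psi n \<noteq> 0 \<longleftrightarrow> coprime n q2" by (rule dc_nz[OF d2])
  have "(cnj (chi n) * psi n \<noteq> 0) \<longleftrightarrow> chi n \<noteq> 0 \<and> psi n \<noteq> 0" by simp
  then show "(cnj (chi n) * psi n \<noteq> 0) = coprime n (q1 * q2)"
    using a b by (simp only: coprime_mult_right_iff)
qed

lemma powr_nat_mult: "(of_nat (a * b) :: complex) powr s = of_nat a powr s * of_nat b powr s"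
proof -
  have "(of_nat (a * b) :: complex) = of_nat a * of_nat b" by simp
  moreover have "(of_nat a * of_nat b :: complex) powr s = of_nat a powr s * of_nat b powr s"
    by (rule powr_times_real) auto
  ultimately show ?thesis by simp
qed

lemma sparse_sums:
  fixes d :: nat and a :: "nat \<Rightarrow> complex"
  assumes d: "d > 0" and S: "a sums S"
  shows "(\<lambda>k. if d dvd Suc k then a (Suc k div d - 1) else 0) sums S"
proof -
  define g where "g j = d * j + (d - 1)" for j
  have sm: "strict_mono g"
  proof (rule strict_monoI)
    fix x y :: nat assume "x < y"
    then have "d * x < d * y" using d by simp
    then show "g x < g y" unfolding g_def by (rule add_less_mono1)
  qed
  have gS: "Suc (g j) = d * Suc j" for j unfolding g_def using d by simp
  have zero: "(if d dvd Suc n then a (Suc n div d - 1) else 0) = 0" if "n \<notin> range g" for n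
  proof (cases "d dvd Suc n")
    case True
    then obtain k where k: "Suc n = d * k" by blast
    then have "k > 0" by (cases k) auto
    then have "Suc (g (k - 1)) = Suc n" using gS[of "k - 1"] k by simp
    then have "g (k - 1) = n" by simp
    then show ?thesis using that by auto
  qed simp
  have "(\<lambda>j. (if d dvd Suc (g j) then a (Suc (g j) div d - 1) else 0)) = a"
    using d by (simp add: gS)
  moreover have "(\<lambda>j. (if d dvd Suc (g j) then a (Suc (g j) div d - 1) else 0)) sums S \<longleftrightarrow> (\<lambda>k. if d dvd Suc k then a (Suc k div d - 1) else 0) sums S"
    by (rule sums_mono_reindex[OF sm zero])
  ultimately show ?thesis using S by simp
qed

lemma term_id:
  fixes l b n a q :: nat and s cha psib psinb :: complex
  assumes l: "l > 0" and pb: "psinb = psib"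
  shows "cha * psib * ecirc (real (a * b) / real q) * lerch_term (real (a * l) / real q) (real b / real l) s n
       = of_nat l powr s * (psinb * (cha * ecirc (real (a * (n * l + b)) / real q)) / of_nat (n * l + b) powr s)"
proof -
  have ar: "real (a * b) / real q + real n * (real (a * l) / real q) = real (a * (n * l + b)) / real q"
  proof -
    have "real (a * (n * l + b)) = real (a * b) + real n * real (a * l)" by (simp add: algebra_simps)
    then show ?thesis by (simp add: add_divide_distrib)
  qed
  have e: "ecirc (real (a * b) / real q) * ecirc (real n * (real (a * l) / real q)) = ecirc (real (a * (n * l + b)) / real q)"
    using ecirc_add[symmetric] ar by metis
  have pr: "complex_of_real (real n + real b / real l) * of_nat l = of_nat (n * l + b)"
  proof -
    have "(real n + real b / real l) * real l = real (n * l + b)" using l by (simp add: field_simps)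
    then have "complex_of_real ((real n + real b / real l) * real l) = of_nat (n * l + b)" by (metis of_real_of_nat_eq)
    then show ?thesis by simp
  qed
  have pw: "(of_nat (n * l + b) :: complex) powr s = complex_of_real (real n + real b / real l) powr s * of_nat l powr s"
    unfolding pr[symmetric] by (rule powr_times_real) auto
  have ln0: "(of_nat l :: complex) powr s \<noteq> 0" using l by simp
  show ?thesis
    unfolding lerch_term_def pw pb using ln0 e[symmetric]
    by (simp add: field_simps)
qed

lemma Td_sums:
  assumes psi: "dirichlet_char l psi" and d: "d > 0"
    and Ls: "L_term (\<lambda>n. cnj (chis n) * psi n) s sums Lv"
  shows "(\<lambda>k. if d dvd Suc k then psi (Suc k) * cnj (chis (Suc k div d)) / of_nat (Suc k) powr s else 0)
          sums (psi d / of_nat d powr s * Lv)"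
proof -
  define a where "a j = psi d / of_nat d powr s * L_term (\<lambda>n. cnj (chis n) * psi n) s j" for j
  have aS: "a sums (psi d / of_nat d powr s * Lv)" unfolding a_def by (rule sums_mult[OF Ls])
  have eq: "(if d dvd Suc k then psi (Suc k) * cnj (chis (Suc k div d)) / of_nat (Suc k) powr s else 0)
      = (if d dvd Suc k then a (Suc k div d - 1) else 0)" for k
  proof (cases "d dvd Suc k")
    case True
    then obtain j where j: "Suc k = d * j" by blast
    then have j0: "j > 0" by (cases j) auto
    have sj: "Suc (j - 1) = j" using j0 by simp
    have "a (Suc k div d - 1) = psi d / of_nat d powr s * (cnj (chis j) * psi j / of_nat j powr s)"
      unfolding a_def L_term_def using j d sj by simp
    also have "\<dots> = psi (d * j) * cnj (chis j) / of_nat (d * j) powr s"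
      using dc_mult[OF psi, of d j] powr_nat_mult[of d j s] by (simp add: field_simps)
    finally show ?thesis using True j d by simp
  qed simp
  show ?thesis unfolding eq using sparse_sums[OF d aS] .
qed

lemma main_gt1:
  fixes q l qs :: nat and chi psi chis :: "nat \<Rightarrow> complex"
    and Z :: "real \<Rightarrow> real \<Rightarrow> complex \<Rightarrow> complex" and Lv :: complex
  assumes chi: "dirichlet_char q chi"
    and psi: "dirichlet_char l psi"
    and prim: "primitive_char qs chis"
    and ind: "induces qs chis q chi"
    and Zs: "\<And>\<alpha> c. c > 0 \<Longrightarrow> lerch_term \<alpha> c s sums Z \<alpha> c s"
    and Ls: "L_term (\<lambda>n. cnj (chis n) * psi n) s sums Lv"
  shows "(\<Sum>a<q. \<Sum>b=1..l. chi a * psi b * ecirc (real (a * b) / real q) *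
            Z (real (a * l) / real q) (real b / real l) s)
         = (of_nat l) powr s * gauss_sum qs chis * nu s qs chis psi (q div qs) * Lv"
proof -
  define r where "r = q div qs"
  define E where "E = {d. d dvd r}"
  define \<tau> where "\<tau> = gauss_sum qs chis"
  define c where "c d = of_int (mu (r div d)) * chis (r div d)" for d
  define Gm where "Gm m = (\<Sum>a<q. chi a * ecirc (real (a * m) / real q))" for m
  define K where "K k = psi (Suc k) * Gm (Suc k) / of_nat (Suc k) powr s" for k
  define Td where "Td d k = (if d dvd Suc k then psi (Suc k) * cnj (chis (Suc k div d)) / of_nat (Suc k) powr s else 0)" for d k
  have q: "q > 0" using dc_pos[OF chi] .
  have l: "l > 0" using dc_pos[OF psi] .
  have qsq: "qs dvd q" using ind unfolding induces_def by auto
  have r: "r > 0" unfolding r_def using q qsq by (metis dvd_div_eq_0_iff gr0I)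
  have fE: "finite E" unfolding E_def using r by simp
  have E0: "d > 0" if "d \<in> E" for d using that r unfolding E_def by (cases d) auto
  have KT: "K k = (\<Sum>d\<in>E. \<tau> * c d * of_nat d * Td d k)" for k
  proof -
    have "Gm (Suc k) = \<tau> * (\<Sum>d\<in>E. c d * (if d dvd Suc k then of_nat d * cnj (chis (Suc k div d)) else 0))"
      unfolding Gm_def \<tau>_def c_def E_def r_def using G_formula[OF prim ind q, of "Suc k"]
      by (simp only: mult.assoc)
    then have "K k = (\<Sum>d\<in>E. \<tau> * c d * (psi (Suc k) * (if d dvd Suc k then of_nat d * cnj (chis (Suc k div d)) else 0) / of_nat (Suc k) powr s))"
      unfolding K_def by (simp add: sum_distrib_left sum_divide_distrib mult_ac)
    also have "\<dots> = (\<Sum>d\<in>E. \<tau> * c d * of_nat d * Td d k)"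
      unfolding Td_def by (intro sum.cong refl) (simp add: mult_ac)
    finally show ?thesis .
  qed
  have Ksum: "K sums (\<Sum>d\<in>E. \<tau> * c d * of_nat d * (psi d / of_nat d powr s * Lv))"
    unfolding KT
  proof (rule sums_sum)
    fix d assume "d \<in> E"
    then have "Td d sums (psi d / of_nat d powr s * Lv)" unfolding Td_def using Td_sums[OF psi E0 Ls] by blast
    then show "(\<lambda>k. \<tau> * c d * of_nat d * Td d k) sums (\<tau> * c d * of_nat d * (psi d / of_nat d powr s * Lv))"
      by (rule sums_mult)
  qed
  have val: "(\<Sum>d\<in>E. \<tau> * c d * of_nat d * (psi d / of_nat d powr s * Lv)) = \<tau> * nu s qs chis psi r * Lv"
  proof -
    have "of_nat d * (psi d / of_nat d powr s) = (of_nat d :: complex) powr (1 - s) * psi d" for d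
      by (simp add: powr_diff powr_to_1)
    then have "(\<Sum>d\<in>E. \<tau> * c d * of_nat d * (psi d / of_nat d powr s * Lv)) = (\<Sum>d\<in>E. \<tau> * Lv * ((of_nat d :: complex) powr (1 - s) * psi d * c d))"
      by (intro sum.cong refl) (metis (no_types, lifting) mult.assoc mult.commute mult.left_commute)
    also have "\<dots> = \<tau> * Lv * nu s qs chis psi r"
      unfolding nu_def E_def c_def by (simp add: sum_distrib_left mult_ac)
    finally show ?thesis by simp
  qed
  have grp: "(\<lambda>n. sum K {n * l..<n * l + l}) sums (\<tau> * nu s qs chis psi r * Lv)"
    using sums_group[OF Ksum l] val by simp
  define C where "C a b = chi a * psi b * ecirc (real (a * b) / real q)" for a b
  have ser: "(\<lambda>n. \<Sum>a<q. \<Sum>b=1..l. C a b * lerch_term (real (a * l) / real q) (real b / real l) s n)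
      sums (\<Sum>a<q. \<Sum>b=1..l. C a b * Z (real (a * l) / real q) (real b / real l) s)"
  proof (intro sums_sum sums_mult)
    fix a b assume "b \<in> {1..l}"
    then have "real b / real l > 0" using l by simp
    then show "lerch_term (real (a * l) / real q) (real b / real l) s sums Z (real (a * l) / real q) (real b / real l) s"
      by (rule Zs)
  qed
  have tw: "(\<Sum>a<q. \<Sum>b=1..l. C a b * lerch_term (real (a * l) / real q) (real b / real l) s n)
      = of_nat l powr s * sum K {n * l..<n * l + l}" for n
  proof -
    have "sum K {n * l..<n * l + l} = (\<Sum>b=1..l. K (n * l + b - 1))"
      by (rule sum.reindex_bij_witness[of _ "\<lambda>b. n * l + b - 1" "\<lambda>k. k + 1 - n * l"]) auto
    also have "\<dots> = (\<Sum>b=1..l. \<Sum>a<q. psi (n * l + b) * (chi a * ecirc (real (a * (n * l + b)) / real q)) / of_nat (n * l + b) powr s)"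
    proof (rule sum.cong[OF refl])
      fix b assume "b \<in> {1..l}"
      then have "Suc (n * l + b - 1) = n * l + b" by simp
      then show "K (n * l + b - 1) = (\<Sum>a<q. psi (n * l + b) * (chi a * ecirc (real (a * (n * l + b)) / real q)) / of_nat (n * l + b) powr s)"
        unfolding K_def Gm_def by (simp add: sum_distrib_left sum_divide_distrib)
    qed
    finally have X: "sum K {n * l..<n * l + l} = (\<Sum>b=1..l. \<Sum>a<q. psi (n * l + b) * (chi a * ecirc (real (a * (n * l + b)) / real q)) / of_nat (n * l + b) powr s)" .
    have "of_nat l powr s * sum K {n * l..<n * l + l} = of_nat l powr s * (\<Sum>b=1..l. \<Sum>a<q. psi (n * l + b) * (chi a * ecirc (real (a * (n * l + b)) / real q)) / of_nat (n * l + b) powr s)"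
      by (simp only: X)
    also have "\<dots> = (\<Sum>b=1..l. \<Sum>a<q. of_nat l powr s * (psi (n * l + b) * (chi a * ecirc (real (a * (n * l + b)) / real q)) / of_nat (n * l + b) powr s))"
      by (simp only: sum_distrib_left)
    also have "\<dots> = (\<Sum>a<q. \<Sum>b=1..l. of_nat l powr s * (psi (n * l + b) * (chi a * ecirc (real (a * (n * l + b)) / real q)) / of_nat (n * l + b) powr s))"
      by (rule sum.swap)
    also have "\<dots> = (\<Sum>a<q. \<Sum>b=1..l. C a b * lerch_term (real (a * l) / real q) (real b / real l) s n)"
    proof (intro sum.cong refl)
      fix a b
      have "psi (b + n * l) = psi b" by (rule dc_per_k[OF psi])
      then have pb: "psi (n * l + b) = psi b" by (simp add: add.commute)
      show "of_nat l powr s * (psi (n * l + b) * (chi a * ecirc (real (a * (n * l + b)) / real q)) / of_nat (n * l + b) powr s)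
          = C a b * lerch_term (real (a * l) / real q) (real b / real l) s n"
        unfolding C_def using term_id[OF l pb, where cha = "chi a" and a = a and q = q and s = s and n = n] by simp
    qed
    finally show ?thesis by simp
  qed
  have "(\<lambda>n. \<Sum>a<q. \<Sum>b=1..l. C a b * lerch_term (real (a * l) / real q) (real b / real l) s n)
      sums (of_nat l powr s * (\<tau> * nu s qs chis psi r * Lv))"
    unfolding tw by (rule sums_mult[OF grp])
  then have "(\<Sum>a<q. \<Sum>b=1..l. C a b * Z (real (a * l) / real q) (real b / real l) s) = of_nat l powr s * (\<tau> * nu s qs chis psi r * Lv)"
    using ser sums_unique2 by blast
  then show ?thesis unfolding C_def \<tau>_def r_def by (simp add: mult_ac)
qed

theorem proposition2p2:
  fixes q l qs :: nat and chi psi chis :: "nat \<Rightarrow> complex"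
    and Z :: "real \<Rightarrow> real \<Rightarrow> complex \<Rightarrow> complex"
    and L :: "(nat \<Rightarrow> complex) \<Rightarrow> complex \<Rightarrow> complex"
  assumes chi: "dirichlet_char q chi"
    and psi: "dirichlet_char l psi"
    and prim: "primitive_char qs chis"
    and ind: "induces qs chis q chi"
    and Z_hol: "\<And>\<alpha> c. c > 0 \<Longrightarrow> Z \<alpha> c holomorphic_on (UNIV - {1})"
    and Z_ser: "\<And>\<alpha> c s. c > 0 \<Longrightarrow> Re s > 1 \<Longrightarrow> lerch_term \<alpha> c s sums Z \<alpha> c s"
    and L_hol: "\<And>m f. dirichlet_char m f \<Longrightarrow> L f holomorphic_on (UNIV - {1})"
    and L_ser: "\<And>m f s. dirichlet_char m f \<Longrightarrow> Re s > 1 \<Longrightarrow> L_term f s sums L f s"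
    and s1: "s \<noteq> 1"
  shows "(\<Sum>a<q. \<Sum>b=1..l. chi a * psi b * ecirc (real (a * b) / real q) *
            Z (real (a * l) / real q) (real b / real l) s)
         = (of_nat l) powr s * gauss_sum qs chis * nu s qs chis psi (q div qs) *
            L (\<lambda>n. cnj (chis n) * psi n) s"
proof -
  define f where "f = (\<lambda>n. cnj (chis n) * psi n)"
  define S where "S = (UNIV - {1::complex})"
  define C where "C a b = chi a * psi b * ecirc (real (a * b) / real q)" for a b
  define LHS where "LHS z = (\<Sum>a<q. \<Sum>b=1..l. C a b * Z (real (a * l) / real q) (real b / real l) z)" for z
  define RHS where "RHS z = (of_nat l) powr z * gauss_sum qs chis * nu z qs chis psi (q div qs) * L f z" for z
  have dchis: "dirichlet_char qs chis" using prim by (simp add: primitive_char_def)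
  have df: "dirichlet_char (qs * l) f" unfolding f_def by (rule dc_prod[OF dchis psi])
  have hL: "LHS holomorphic_on S"
    unfolding LHS_def
  proof (intro holomorphic_on_sum holomorphic_on_mult holomorphic_on_const)
    fix a b assume "b \<in> {1..l}"
    then have "real b / real l > 0" using dc_pos[OF psi] by simp
    then show "Z (real (a * l) / real q) (real b / real l) holomorphic_on S"
      unfolding S_def by (rule Z_hol)
  qed
  have hR: "RHS holomorphic_on S"
    unfolding RHS_def nu_def
    by (intro holomorphic_on_mult holomorphic_on_sum holomorphic_on_const holomorphic_on_powr_right
        holomorphic_on_diff holomorphic_on_id holomorphic_on_ident L_hol[OF df, unfolded S_def[symmetric]])
  have hF: "(\<lambda>z. LHS z - RHS z) holomorphic_on S" using hL hR by (rule holomorphic_on_diff)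
  have oS: "open S" unfolding S_def by (simp add: open_Diff)
  have cS: "connected S"
  proof -
    have "connected (- {1::complex})" by (rule connected_punctured_universe) simp
    then show ?thesis unfolding S_def by (simp add: Compl_eq_Diff_UNIV)
  qed
  define U where "U = ball (2::complex) (1/2)"
  have ReU: "Re z > 1" if "z \<in> U" for z
  proof -
    have "norm (z - 2) < 1/2" using that unfolding U_def by (simp add: dist_norm norm_minus_commute)
    moreover have "\<bar>Re (z - 2)\<bar> \<le> norm (z - 2)" by (rule abs_Re_le_cmod)
    ultimately show ?thesis by simp
  qed
  have US: "U \<subseteq> S" unfolding S_def using ReU by force
  have xiS: "(2::complex) \<in> S" unfolding S_def by simp
  have lim: "(2::complex) islimpt U" unfolding U_def by (simp add: islimpt_ball)
  have zero: "LHS z - RHS z = 0" if "z \<in> U" for z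
  proof -
    have Rz: "Re z > 1" using ReU[OF that] .
    have "LHS z = (of_nat l) powr z * gauss_sum qs chis * nu z qs chis psi (q div qs) * L (\<lambda>n. cnj (chis n) * psi n) z"
      unfolding LHS_def C_def
      by (rule main_gt1[OF chi psi prim ind _ L_ser[OF df Rz, unfolded f_def]]) (rule Z_ser[OF _ Rz])
    then show ?thesis unfolding RHS_def f_def by simp
  qed
  have sS: "s \<in> S" unfolding S_def using s1 by simp
  have "LHS s - RHS s = 0"
    by (rule analytic_continuation[OF hF oS cS US xiS lim zero sS])
  then show ?thesis unfolding LHS_def RHS_def C_def f_def by simp
qed

end
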